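(* Let $\gamma\in\mathbb{C}$ with $\Re\gamma>0$ and $\Im\gamma<0$, and let $N>|\gamma|/\pi$ be an integer. Then the integral \[ \int_{\mathcal{R}}\frac{e^{(2z-1)x}}{x\sinh(x)\sinh(\gamma x/N)}\,dx \] converges if $-\frac{\Re\gamma}{2N}<\Re z<1+\frac{\Re\gamma}{2N}$.
   Context: $\mathcal{R}:=(-\infty,-1]\cup\{w\in\mathbb{C}:|w|=1,\Im w\ge0\}\cup[1,\infty)$, oriented from $-\infty$ to $\infty$. *)

theory Defs
  imports "HOL-Complex_Analysis.Complex_Analysis"
begin

definition R_integrand :: "complex \<Rightarrow> int \<Rightarrow> complex \<Rightarrow> complex \<Rightarrow> complex" where
  "R_integrand \<gamma> N z x =
     exp ((2 * z - 1) * x) / (x * sinh x * sinh (\<gamma> * x / of_int N))"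

definition R_arc :: "real \<Rightarrow> complex" where
  "R_arc = part_circlepath 0 1 pi 0"

text \<open>Convergence of the integral of g along R = (-inf,-1] + upper unit half circle + [1,inf):
  each of the three pieces is integrable (the two rays as (improper) integrals on unbounded
  intervals, the arc as a contour integral).\<close>
definition integral_along_R_converges :: "(complex \<Rightarrow> complex) \<Rightarrow> bool" where
  "integral_along_R_converges g \<longleftrightarrow>
     (\<lambda>t::real. g (complex_of_real t)) integrable_on {..-1} \<and>
     g contour_integrable_on R_arc \<and>
     (\<lambda>t::real. g (complex_of_real t)) integrable_on {1..}"

end

theory Submission
  imports Defs
begin
lemma reflect_ray:
  fixes h :: "real \<Rightarrow> complex"
  assumes "h absolutely_integrable_on {1..}"
  shows "(\<lambda>x. h(-x)) absolutely_integrable_on {..-1}"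
proof -
  have "integrable lebesgue (\<lambda>x. indicator {1..} x *\<^sub>R h x)"
    using assms unfolding set_integrable_def by simp
  then have "integrable lebesgue (\<lambda>x. indicator {1..} (0 + (-1) * x) *\<^sub>R h (0 + (-1) * x))"
    using lebesgue_integrable_real_affine_iff[of "-1" "\<lambda>x. indicator {1..} x *\<^sub>R h x" 0] by simp
  moreover have "(\<lambda>x::real. indicator {1..} (0 + (-1) * x) *\<^sub>R h (0 + (-1) * x)) = (\<lambda>x. indicator {..-1} x *\<^sub>R h (-x))"
    by (auto simp: indicator_def fun_eq_iff)
  ultimately have "integrable lebesgue (\<lambda>x. indicator {..-1} x *\<^sub>R h (-x))" by simp
  then show ?thesis unfolding set_integrable_def by simp
qed

lemma sinh_lower:
  fixes w :: complex and t :: real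
  assumes "Re w > 0" "t \<ge> 1"
  shows "norm (sinh (w * of_real t)) \<ge> ((1 - exp (-2 * Re w)) / 2) * exp (Re w * t)"
proof -
  let ?u = "w * of_real t"
  have re: "Re ?u = Re w * t" by simp
  have "norm (exp ?u - exp (-?u)) \<ge> norm (exp ?u) - norm (exp (-?u))"
    by (rule norm_triangle_ineq2)
  also have "norm (exp ?u) - norm (exp (-?u)) = exp (Re w * t) - exp (- (Re w * t))"
    by simp
  finally have 1: "norm (exp ?u - exp (-?u)) \<ge> exp (Re w * t) - exp (- (Re w * t))" .
  have "exp (- (Re w * t)) \<le> exp (Re w * t - 2 * Re w)"
    using assms by (intro exp_mono) (simp add: algebra_simps mult_left_mono)
  also have "\<dots> = exp (Re w * t) * exp (-2 * Re w)" by (simp add: exp_add[symmetric])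
  finally have 2: "exp (Re w * t) - exp (- (Re w * t)) \<ge> (1 - exp (-2 * Re w)) * exp (Re w * t)"
    by (simp add: algebra_simps)
  have "norm (sinh ?u) = norm (exp ?u - exp (-?u)) / 2" unfolding sinh_def by simp
  with 1 2 show ?thesis by simp
qed

lemma ray_int:
  fixes w c :: complex
  assumes w: "Re w > 0" and c: "Re c < 1 + Re w"
  shows "(\<lambda>t::real. exp (c * of_real t) / (of_real t * sinh (1 * of_real t) * sinh (w * of_real t)))
          absolutely_integrable_on {1..}"
proof -
  define a where "a = Re w"
  define k where "k = (1 - exp (-2 * a)) / 2"
  define k1 where "k1 = (1 - exp (-2 * (1::real))) / 2"
  define b where "b = 1 + a - Re c"
  have a: "a > 0" using w a_def by simp
  have k: "k > 0" unfolding k_def using a by simp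
  have k1: "k1 > 0" unfolding k1_def by simp
  have b: "b > 0" using c unfolding b_def a_def by simp
  let ?f = "\<lambda>t::real. exp (c * of_real t) / (of_real t * sinh (1 * of_real t) * sinh (w * of_real t))"
  have s1: "norm (sinh (1 * complex_of_real t)) \<ge> k1 * exp t" if "t \<ge> 1" for t
    using sinh_lower[of 1 t] that unfolding k1_def by simp
  have sw: "norm (sinh (w * complex_of_real t)) \<ge> k * exp (a * t)" if "t \<ge> 1" for t
    using sinh_lower[of w t] that w unfolding k_def a_def by simp
  have nz: "of_real t * sinh (1 * complex_of_real t) * sinh (w * of_real t) \<noteq> 0" if "t \<ge> 1" for t
  proof -
    have p: "k1 * exp t > 0" "k * exp (a * t) > 0" using k k1 by auto
    have "sinh (1 * complex_of_real t) \<noteq> 0" using s1[OF that] p(1) by (metis norm_zero not_le)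
    moreover have "sinh (w * complex_of_real t) \<noteq> 0" using sw[OF that] p(2) by (metis norm_zero not_le)
    ultimately show ?thesis using that by simp
  qed
  have bound: "norm (?f t) \<le> (1 / (k1 * k)) * exp (- b * t)" if t: "t \<ge> 1" for t
  proof -
    have "norm (?f t) = exp (Re c * t) / (t * norm (sinh (1 * complex_of_real t)) * norm (sinh (w * of_real t)))"
      using t by (simp add: norm_divide norm_mult)
    also have "\<dots> \<le> exp (Re c * t) / (1 * (k1 * exp t) * (k * exp (a * t)))"
    proof -
      have p: "k1 * exp t > 0" "k * exp (a * t) > 0" using k k1 by auto
      have D: "1 * (k1 * exp t) * (k * exp (a * t)) \<le> t * norm (sinh (1 * complex_of_real t)) * norm (sinh (w * of_real t))"
        using t p s1[OF t] sw[OF t] by (intro mult_mono) auto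
      have "0 < 1 * (k1 * exp t) * (k * exp (a * t))" using p by simp
      then show ?thesis using D by (intro divide_left_mono) auto
    qed
    also have "\<dots> = (1 / (k1 * k)) * exp (- b * t)"
      unfolding b_def by (simp add: field_simps exp_add[symmetric] exp_diff algebra_simps)
    finally show ?thesis .
  qed
  have cont: "continuous_on {1..} ?f"
    using nz by (intro continuous_intros) auto
  show ?thesis
  proof (rule measurable_bounded_by_integrable_imp_absolutely_integrable)
    show "?f \<in> borel_measurable (lebesgue_on {1..})"
      by (rule continuous_imp_measurable_on_sets_lebesgue[OF cont]) auto
    show "{1::real..} \<in> sets lebesgue" by auto
    show "(\<lambda>t. (1 / (k1 * k)) * exp (- b * t)) integrable_on {1..}"
      using has_integral_exp_minus_to_infinity[OF b, of 1]
      by (intro integrable_cmul[where 'b=real, simplified]) (auto simp: integrable_on_def)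
    show "norm (?f t) \<le> (1 / (k1 * k)) * exp (- b * t)" if "t \<in> {1..}" for t
      using bound that by auto
  qed
qed
lemma sinh_small_zero:
  fixes u :: complex
  assumes "sinh u = 0" "norm u < pi"
  shows "u = 0"
proof -
  have "exp u = exp (-u)" using assms(1) unfolding sinh_def by simp
  then have "exp (2 * u) = 1"
    by (metis exp_add exp_minus_inverse mult_2)
  then obtain n :: int where re: "Re (2*u) = 0" and im: "Im (2*u) = of_int (2*n) * pi"
    using exp_eq_1 by blast
  have imu: "Im u = of_int n * pi" using im by simp
  have "\<bar>Im u\<bar> < pi" using abs_Im_le_cmod[of u] assms(2) by linarith
  then have "\<bar>of_int n\<bar> * pi < 1 * pi" using imu by (simp add: abs_mult)
  then have "\<bar>of_int n :: real\<bar> < 1" using pi_gt_zero mult_less_cancel_right_pos by blast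
  then have "n = 0" by linarith
  then show ?thesis using re imu by (simp add: complex_eq_iff)
qed

theorem lemma2p1:
  fixes \<gamma> z :: complex and N :: int
  assumes "Re \<gamma> > 0" and "Im \<gamma> < 0"
    and "real_of_int N > cmod \<gamma> / pi"
    and "- Re \<gamma> / (2 * real_of_int N) < Re z"
    and "Re z < 1 + Re \<gamma> / (2 * real_of_int N)"
  shows "integral_along_R_converges (R_integrand \<gamma> N z)"
proof -
  have Npos: "real_of_int N > 0"
    using assms(3) by (smt (verit) divide_nonneg_pos norm_ge_zero pi_gt_zero)
  define w where "w = \<gamma> / of_int N"
  have Rew: "Re w = Re \<gamma> / real_of_int N"
    unfolding w_def by (metis Re_divide_of_real of_real_of_int_eq)
  have w: "Re w > 0" using Rew Npos assms(1) by simp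
  have eq: "\<gamma> * x / of_int N = w * x" for x unfolding w_def by simp
  have F: "R_integrand \<gamma> N z (complex_of_real t) =
      exp ((2*z-1) * of_real t) / (of_real t * sinh (1 * of_real t) * sinh (w * of_real t))" for t
    unfolding R_integrand_def eq by simp
  have G: "R_integrand \<gamma> N z (complex_of_real t) =
      - (exp ((1-2*z) * of_real (-t)) / (of_real (-t) * sinh (1 * of_real (-t)) * sinh (w * of_real (-t))))" for t
    unfolding R_integrand_def eq by (simp add: sinh_minus algebra_simps)
  have h1: "Re \<gamma> / (2 * real_of_int N) = Re w / 2" using Rew by simp
  have c1: "Re (2*z-1) < 1 + Re w" using assms(5) h1 by simp
  have c2: "Re (1-2*z) < 1 + Re w" using assms(4) h1 by simp
  have pos: "(\<lambda>t::real. R_integrand \<gamma> N z (complex_of_real t)) integrable_on {1..}"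
    unfolding F by (rule set_lebesgue_integral_eq_integral(1)[OF ray_int[OF w c1]])
  have "(\<lambda>t::real. exp ((1-2*z) * of_real (-t)) / (of_real (-t) * sinh (1 * of_real (-t)) * sinh (w * of_real (-t))))
     integrable_on {..-1}"
    by (rule set_lebesgue_integral_eq_integral(1)[OF reflect_ray[OF ray_int[OF w c2]]])
  then have neg: "(\<lambda>t::real. R_integrand \<gamma> N z (complex_of_real t)) integrable_on {..-1}"
    unfolding G by (rule integrable_neg)
  have ng: "norm (\<gamma> * x / of_int N) < pi" if "norm x = 1" for x
  proof -
    have "norm (\<gamma> * x / of_int N) = cmod \<gamma> / real_of_int N"
      using that Npos by (simp add: norm_mult norm_divide)
    also have "\<dots> < pi" using assms(3) Npos pi_gt_zero by (simp add: field_simps)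
    finally show ?thesis .
  qed
  have gnz: "\<gamma> \<noteq> 0" using assms(1) by auto
  have nzs: "x * sinh x * sinh (\<gamma> * x / of_int N) \<noteq> 0" if x: "x \<in> sphere 0 1" for x :: complex
  proof -
    from x have nx: "norm x = 1" by simp
    then have x0: "x \<noteq> 0" by auto
    have "sinh x \<noteq> 0" using sinh_small_zero[of x] nx x0 pi_gt3 by auto
    moreover have "sinh (\<gamma> * x / of_int N) \<noteq> 0"
      using sinh_small_zero[of "\<gamma> * x / of_int N"] ng[OF nx] x0 gnz Npos by auto
    ultimately show "x * sinh x * sinh (\<gamma> * x / of_int N) \<noteq> 0" using x0 by simp
  qed
  have cont: "continuous_on (sphere 0 1) (R_integrand \<gamma> N z)"
    unfolding R_integrand_def
    by (intro continuous_intros) (use nzs in auto)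
  have arc: "R_integrand \<gamma> N z contour_integrable_on R_arc"
    unfolding R_arc_def
    by (rule contour_integrable_continuous_part_circlepath,
        rule continuous_on_subset[OF cont], rule path_image_part_circlepath_subset') simp
  show ?thesis unfolding integral_along_R_converges_def using pos neg arc by blast
qed
end
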